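(* Let $G$ be a graph with $\mathcal{P}(G)=\mathcal{T}(G)$. Then $G$ contains no induced subgraph that is a 2-plex on 4 vertices, and no induced cycle (hole) of length at least 4 whose length is not a multiple of 3.
   Context: All graphs are simple and connected. A 2-plex is a vertex set $K$ such that $G[K]$ has minimum degree at least $|K|-2$. A hole is an induced cycle of length at least 4. A co-2-plex is a vertex set inducing a subgraph of maximum degree at most 1. $\mathcal{P}(G)=\mathrm{conv}\{\chi^S : S\text{ co-2-plex of } G\}$. $\mathcal{T}(G)$ is the polytope of $x\in\mathbb{R}^V$ satisfying $0\le x\le 1$ and $x(W)+(|W|-1)x_w\le|W|$ for all $w\in V$ and $W\subseteq N(w)$, where $x(A)=\sum_{a\in A}x_a$. *)

theory Defs
  imports "HOL-Analysis.Analysis"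
begin

definition simple_connected_graph :: "('a::finite \<Rightarrow> 'a \<Rightarrow> bool) \<Rightarrow> bool" where
  "simple_connected_graph E \<longleftrightarrow>
     (\<forall>u v. E u v \<longrightarrow> E v u) \<and> (\<forall>v. \<not> E v v) \<and> (\<forall>u v. E\<^sup>*\<^sup>* u v)"

definition nbhd :: "('a \<Rightarrow> 'a \<Rightarrow> bool) \<Rightarrow> 'a \<Rightarrow> 'a set" where
  "nbhd E w = {u. E w u}"

definition two_plex :: "('a \<Rightarrow> 'a \<Rightarrow> bool) \<Rightarrow> 'a set \<Rightarrow> bool" where
  "two_plex E K \<longleftrightarrow> (\<forall>v\<in>K. card {u\<in>K. E v u} + 2 \<ge> card K)"

definition co_two_plex :: "('a \<Rightarrow> 'a \<Rightarrow> bool) \<Rightarrow> 'a set \<Rightarrow> bool" where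
  "co_two_plex E S \<longleftrightarrow> (\<forall>v\<in>S. card {u\<in>S. E v u} \<le> 1)"

definition charvec :: "'a::finite set \<Rightarrow> real ^ 'a" where
  "charvec S = (\<chi> v. if v \<in> S then 1 else 0)"

definition co2plex_polytope :: "('a::finite \<Rightarrow> 'a \<Rightarrow> bool) \<Rightarrow> (real ^ 'a) set" where
  "co2plex_polytope E = convex hull {charvec S | S. co_two_plex E S}"

definition T_polytope :: "('a::finite \<Rightarrow> 'a \<Rightarrow> bool) \<Rightarrow> (real ^ 'a) set" where
  "T_polytope E = {x. (\<forall>v. 0 \<le> x $ v \<and> x $ v \<le> 1) \<and>
     (\<forall>w W. W \<subseteq> nbhd E w \<longrightarrow>
        (\<Sum>a\<in>W. x $ a) + (real (card W) - 1) * x $ w \<le> real (card W))}"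

definition is_hole :: "('a \<Rightarrow> 'a \<Rightarrow> bool) \<Rightarrow> 'a list \<Rightarrow> bool" where
  "is_hole E cs \<longleftrightarrow> length cs \<ge> 4 \<and> distinct cs \<and>
     (\<forall>i<length cs. \<forall>j<length cs.
        E (cs ! i) (cs ! j) \<longleftrightarrow> (j = (i + 1) mod length cs \<or> i = (j + 1) mod length cs))"

end

theory Submission
  imports Defs
begin

lemma hull_bound:
  fixes h :: "'i \<Rightarrow> 'a::finite"
  assumes "\<And>S. co_two_plex E S \<Longrightarrow> (\<Sum>i\<in>I. charvec S $ h i) \<le> b"
    and "y \<in> co2plex_polytope E"
  shows "(\<Sum>i\<in>I. y $ h i) \<le> b"
proof -
  have cv: "convex {y::real^'a. (\<Sum>i\<in>I. y $ h i) \<le> b}"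
    unfolding convex_def
  proof (intro ballI allI impI, simp)
    fix x y :: "real^'a" and u v :: real
    assume a: "(\<Sum>i\<in>I. x $ h i) \<le> b" "(\<Sum>i\<in>I. y $ h i) \<le> b" "0 \<le> u" "0 \<le> v" "u + v = 1"
    have "(\<Sum>i\<in>I. u * x $ h i + v * y $ h i) = u * (\<Sum>i\<in>I. x $ h i) + v * (\<Sum>i\<in>I. y $ h i)"
      by (simp add: sum.distrib sum_distrib_left)
    also have "\<dots> \<le> u * b + v * b"
      using a by (intro add_mono mult_left_mono) auto
    also have "\<dots> = b" using a(5) by (metis distrib_right mult_1)
    finally show "(\<Sum>i\<in>I. u * x $ h i + v * y $ h i) \<le> b" .
  qed
  have "co2plex_polytope E \<subseteq> {y. (\<Sum>i\<in>I. y $ h i) \<le> b}"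
    unfolding co2plex_polytope_def
    by (rule hull_minimal) (use assms(1) cv in auto)
  with assms(2) show ?thesis by auto
qed

lemma shift_sum:
  fixes s :: "nat \<Rightarrow> 'b::cancel_comm_monoid_add"
  assumes "s k = s 0"
  shows "(\<Sum>i<k. s (Suc i)) = (\<Sum>i<k. s i)"
proof -
  have "(\<Sum>i<Suc k. s i) = s 0 + (\<Sum>i<k. s (Suc i))" by (rule sum.lessThan_Suc_shift)
  moreover have "(\<Sum>i<Suc k. s i) = (\<Sum>i<k. s i) + s k" by simp
  ultimately have "s 0 + (\<Sum>i<k. s (Suc i)) = s 0 + (\<Sum>i<k. s i)" using assms by (simp add: add.commute)
  then show ?thesis by simp
qed

lemma tri:
  fixes E :: "'a::finite \<Rightarrow> 'a \<Rightarrow> bool"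
  assumes sym: "\<forall>u v. E u v \<longrightarrow> E v u" and irr: "\<forall>v. \<not> E v v"
    and K: "K = {a,b,c,z}" and d: "distinct [a,b,c,z]"
    and tp: "two_plex E K" and S: "a \<in> S" "b \<in> S" "c \<in> S" and cs: "co_two_plex E S"
  shows False
proof -
  have one: "\<not> (E v p \<and> E v q)" if "v \<in> S" "p \<in> S" "q \<in> S" "p \<noteq> q" for v p q
  proof
    assume "E v p \<and> E v q"
    then have "{p,q} \<subseteq> {u\<in>S. E v u}" using that by auto
    then have "card {p,q} \<le> card {u\<in>S. E v u}" by (intro card_mono) auto
    moreover have "card {u\<in>S. E v u} \<le> 1" using cs that unfolding co_two_plex_def by auto
    ultimately show False using that by simp
  qed
  have two: "E v p \<or> E v q" if "K = {v,p,q,z}" for v p q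
  proof (rule ccontr)
    assume "\<not> (E v p \<or> E v q)"
    then have "{u\<in>K. E v u} \<subseteq> {z}" using that irr by auto
    then have "card {u\<in>K. E v u} \<le> card {z}" by (intro card_mono) auto
    then have "card {u\<in>K. E v u} \<le> 1" by simp
    moreover have "card {u\<in>K. E v u} + 2 \<ge> card K" using tp that unfolding two_plex_def by auto
    moreover have "card K = 4" using K d by simp
    ultimately show False by simp
  qed
  have "E a b \<or> E a c" by (rule two) (use K in auto)
  moreover have "E b a \<or> E b c" by (rule two) (use K in auto)
  moreover have "E c a \<or> E c b" by (rule two) (use K in auto)
  moreover have "\<not> (E a b \<and> E a c)" "\<not> (E b a \<and> E b c)" "\<not> (E c a \<and> E c b)"
    using one S d by auto
  ultimately show False using sym by blast
qed

lemma ar1: "(p::real) \<le> 3 \<Longrightarrow> p \<le> m \<Longrightarrow> 3/5*p + (m-1)*(3/5) \<le> m"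
  by (simp add: field_simps)
lemma ar2: "(p::real) \<le> 2 \<Longrightarrow> p \<le> m \<Longrightarrow> 2/3*p + (m-1)*(2/3) \<le> m"
  by (simp add: field_simps)

lemma part1:
  fixes E :: "'a::finite \<Rightarrow> 'a \<Rightarrow> bool"
  assumes sym: "\<forall>u v. E u v \<longrightarrow> E v u" and irr: "\<forall>v. \<not> E v v"
    and eq: "co2plex_polytope E = T_polytope E"
    and c4: "card K = 4" and tp: "two_plex E K"
  shows False
proof -
  have "finite K" by simp
  then obtain xs where xs: "set xs = K" "distinct xs" using finite_distinct_list by blast
  have "length xs = 4" using distinct_card[OF xs(2)] xs(1) c4 by simp
  then have "\<exists>a b c z. xs = [a,b,c,z]"
    by (simp add: length_Suc_conv eval_nat_numeral, elim exE conjE, simp)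
  then obtain a b c z where "xs = [a,b,c,z]" by blast
  with xs have K: "K = {a,b,c,z}" and d: "distinct [a,b,c,z]" by auto
  have cb: "card (K \<inter> S) \<le> 2" if cs: "co_two_plex E S" for S
  proof (rule ccontr)
    assume "\<not> card (K \<inter> S) \<le> 2"
    then have c3: "card (K \<inter> S) \<ge> 3" by simp
    have le2: "card (K \<inter> S) \<le> 2" if "p \<notin> S" "q \<notin> S" "p \<noteq> q" "p \<in> K" "q \<in> K" for p q
    proof -
      have "K \<inter> S \<subseteq> K - {p,q}" using that by auto
      then have "card (K \<inter> S) \<le> card (K - {p,q})" by (intro card_mono) auto
      also have "\<dots> = 2" using that c4 by (simp add: card_Diff_subset)
      finally show ?thesis .
    qed
    have most: "p \<in> S \<or> q \<in> S" if "p \<in> K" "q \<in> K" "p \<noteq> q" for p q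
    proof (rule ccontr)
      assume "\<not> (p \<in> S \<or> q \<in> S)"
      then have "card (K \<inter> S) \<le> 2" using le2 that by auto
      with c3 show False by simp
    qed
    have "a \<in> S \<and> b \<in> S \<and> c \<in> S \<or> a \<in> S \<and> b \<in> S \<and> z \<in> S \<or> a \<in> S \<and> c \<in> S \<and> z \<in> S
      \<or> b \<in> S \<and> c \<in> S \<and> z \<in> S"
    proof -
      have "a \<in> S \<or> b \<in> S" "a \<in> S \<or> c \<in> S" "a \<in> S \<or> z \<in> S"
        "b \<in> S \<or> c \<in> S" "b \<in> S \<or> z \<in> S" "c \<in> S \<or> z \<in> S"
        by (rule most; use K d in simp)+
      then show ?thesis by blast
    qed
    then show False
    proof (elim disjE conjE)
      assume "a \<in> S" "b \<in> S" "c \<in> S"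
      then show False using tri[OF sym irr K d tp _ _ _ cs] by blast
    next
      assume "a \<in> S" "b \<in> S" "z \<in> S"
      moreover have "K = {a,b,z,c}" unfolding K by blast
      moreover have "distinct [a,b,z,c]" using d by auto
      ultimately show False using tri[OF sym irr _ _ tp _ _ _ cs] by blast
    next
      assume "a \<in> S" "c \<in> S" "z \<in> S"
      moreover have "K = {a,c,z,b}" unfolding K by blast
      moreover have "distinct [a,c,z,b]" using d by auto
      ultimately show False using tri[OF sym irr _ _ tp _ _ _ cs] by blast
    next
      assume "b \<in> S" "c \<in> S" "z \<in> S"
      moreover have "K = {b,c,z,a}" unfolding K by blast
      moreover have "distinct [b,c,z,a]" using d by auto
      ultimately show False using tri[OF sym irr _ _ tp _ _ _ cs] by blast
    qed
  qed
  have gb: "(\<Sum>v\<in>K. charvec S $ v) \<le> 2" if "co_two_plex E S" for S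
  proof -
    have "(\<Sum>v\<in>K. charvec S $ v) = (\<Sum>v\<in>K. if v \<in> S then 1 else 0)"
      by (simp add: charvec_def)
    also have "\<dots> = real (card (K \<inter> S))" by (simp add: sum.If_cases Int_def)
    also have "\<dots> \<le> 2" using cb[OF that] by simp
    finally show ?thesis .
  qed
  define x :: "real^'a" where "x = (\<chi> v. if v \<in> K then 3/5 else 0)"
  have xT: "x \<in> T_polytope E"
    unfolding T_polytope_def
  proof (intro CollectI conjI allI impI)
    fix v show "0 \<le> x $ v" "x $ v \<le> 1" by (auto simp: x_def)
  next
    fix w W assume W: "W \<subseteq> nbhd E w"
    have sW: "(\<Sum>a\<in>W. x $ a) = 3/5 * real (card (W \<inter> K))"
    proof -
      have "(\<Sum>a\<in>W. x $ a) = (\<Sum>a\<in>W. if a \<in> K then 3/5 else 0)" by (simp add: x_def)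
      also have "\<dots> = 3/5 * real (card (W \<inter> K))" by (simp add: sum.If_cases Int_def)
      finally show ?thesis .
    qed
    have pm: "card (W \<inter> K) \<le> card W" by (intro card_mono) auto
    show "(\<Sum>a\<in>W. x $ a) + (real (card W) - 1) * x $ w \<le> real (card W)"
    proof (cases "w \<in> K")
      case True
      have "W \<inter> K \<subseteq> K - {w}" using W irr by (auto simp: nbhd_def)
      then have "card (W \<inter> K) \<le> card (K - {w})" by (intro card_mono) auto
      then have "card (W \<inter> K) \<le> 3" using True c4 by simp
      then have r1: "real (card (W \<inter> K)) \<le> 3" by simp
      have r2: "real (card (W \<inter> K)) \<le> real (card W)" using pm by simp
      have xw: "x $ w = 3/5" using True by (simp add: x_def)
      show ?thesis unfolding sW xw using ar1[OF r1 r2] by simp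
    next
      case False
      then have xw: "x $ w = 0" by (simp add: x_def)
      have r2: "real (card (W \<inter> K)) \<le> real (card W)" using pm by simp
      show ?thesis unfolding sW xw using r2 by simp
    qed
  qed
  then have xP: "x \<in> co2plex_polytope E" using eq by simp
  have "(\<Sum>v\<in>K. x $ v) \<le> 2"
    by (rule hull_bound[where E=E and I=K and h="\<lambda>v. v" and b=2 and y=x, OF gb xP])
  moreover have "(\<Sum>v\<in>K. x $ v) = (\<Sum>v\<in>K. 3/5)" by (rule sum.cong) (auto simp: x_def)
  moreover have "(\<Sum>v\<in>K. (3/5::real)) = 12/5" using c4 by simp
  ultimately show False by simp
qed

lemma three_lem: "3 * (n::nat) \<le> 2 * k \<Longrightarrow> \<not> 3 dvd k \<Longrightarrow> 3 * n + 1 \<le> 2 * k"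
  by presburger

lemma part2:
  fixes E :: "'a::finite \<Rightarrow> 'a \<Rightarrow> bool"
  assumes sym: "\<forall>u v. E u v \<longrightarrow> E v u" and irr: "\<forall>v. \<not> E v v"
    and eq: "co2plex_polytope E = T_polytope E"
    and hole: "is_hole E cs" and nd: "\<not> 3 dvd length cs"
  shows False
proof -
  define k where "k = length cs"
  have k4: "k \<ge> 4" and dist: "distinct cs"
    and adj: "\<And>i j. i < k \<Longrightarrow> j < k \<Longrightarrow> E (cs ! i) (cs ! j) \<longleftrightarrow> (j = Suc i mod k \<or> i = Suc j mod k)"
    using hole unfolding is_hole_def k_def by auto
  have gb: "(\<Sum>i<k. charvec S $ (cs ! i)) \<le> (2 * real k - 1) / 3" if cS: "co_two_plex E S" for S
  proof -
    define s :: "nat \<Rightarrow> nat" where "s i = (if cs ! (i mod k) \<in> S then 1 else 0)" for i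
    have s1: "s i \<le> 1" for i by (simp add: s_def)
    have sS: "cs ! (j mod k) \<in> S" if "s j = 1" for j
      using that by (cases "cs ! (j mod k) \<in> S") (simp_all add: s_def)
    have t: "s i + s (Suc i) + s (Suc (Suc i)) \<le> 2" for i
    proof (rule ccontr)
      assume "\<not> ?thesis"
      then have "s i = 1" "s (Suc i) = 1" "s (Suc (Suc i)) = 1" using s1[of i] s1[of "Suc i"] s1[of "Suc (Suc i)"]
        by linarith+
      then have inS: "cs ! (i mod k) \<in> S" "cs ! (Suc i mod k) \<in> S" "cs ! (Suc (Suc i) mod k) \<in> S"
        using sS by blast+
      have kp: "k > 0" using k4 by simp
      have e1: "E (cs ! (Suc i mod k)) (cs ! (i mod k))"
        using adj[of "Suc i mod k" "i mod k"] kp by (simp add: mod_Suc_eq)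
      have e2: "E (cs ! (Suc i mod k)) (cs ! (Suc (Suc i) mod k))"
        using adj[of "Suc i mod k" "Suc (Suc i) mod k"] kp by (simp add: mod_Suc_eq)
      have "i mod k \<noteq> Suc (Suc i) mod k"
      proof
        assume "i mod k = Suc (Suc i) mod k"
        then have "k dvd (Suc (Suc i) - i)" using mod_eq_dvd_iff_nat[of i "Suc (Suc i)" k] by simp
        then have "k dvd 2" by simp
        then have "k \<le> 2" by (simp add: dvd_imp_le)
        with k4 show False by simp
      qed
      then have ne: "cs ! (i mod k) \<noteq> cs ! (Suc (Suc i) mod k)"
        using dist kp by (simp add: nth_eq_iff_index_eq k_def)
      have "{cs ! (i mod k), cs ! (Suc (Suc i) mod k)} \<subseteq> {u\<in>S. E (cs ! (Suc i mod k)) u}"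
        using inS e1 e2 by auto
      then have "card {cs ! (i mod k), cs ! (Suc (Suc i) mod k)} \<le> card {u\<in>S. E (cs ! (Suc i mod k)) u}"
        by (intro card_mono) auto
      moreover have "card {u\<in>S. E (cs ! (Suc i mod k)) u} \<le> 1"
        using cS inS unfolding co_two_plex_def by auto
      ultimately show False using ne by simp
    qed
    have "(\<Sum>i<k. s i + s (Suc i) + s (Suc (Suc i))) \<le> of_nat (card {..<k}) * 2"
      by (rule sum_bounded_above) (rule t)
    moreover have "(\<Sum>i<k. s (Suc i)) = (\<Sum>i<k. s i)"
      by (rule shift_sum) (simp add: s_def)
    moreover have "(\<Sum>i<k. s (Suc (Suc i))) = (\<Sum>i<k. s (Suc i))"
      by (rule shift_sum[where s = "\<lambda>i. s (Suc i)"]) (use mod_Suc_eq[of k k] in \<open>simp add: s_def\<close>)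
    ultimately have "3 * (\<Sum>i<k. s i) \<le> 2 * k" by (simp add: sum.distrib)
    moreover have "\<not> 3 dvd k" using nd k_def by simp
    ultimately have n3: "3 * (\<Sum>i<k. s i) + 1 \<le> 2 * k"
      using three_lem[of "\<Sum>i<k. s i" k] by blast
    have "(\<Sum>i<k. charvec S $ (cs ! i)) = (\<Sum>i<k. real (s i))"
      by (rule sum.cong) (auto simp: charvec_def s_def)
    also have "\<dots> = real (\<Sum>i<k. s i)" by (simp add: of_nat_sum)
    finally have f: "(\<Sum>i<k. charvec S $ (cs ! i)) = real (\<Sum>i<k. s i)" .
    have "real (3 * (\<Sum>i<k. s i) + 1) \<le> real (2 * k)" using n3 by (rule of_nat_mono)
    then show ?thesis unfolding f by simp
  qed
  define x :: "real^'a" where "x = (\<chi> v. if v \<in> set cs then 2/3 else 0)"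
  have xT: "x \<in> T_polytope E"
    unfolding T_polytope_def
  proof (intro CollectI conjI allI impI)
    fix v show "0 \<le> x $ v" "x $ v \<le> 1" by (auto simp: x_def)
  next
    fix w W assume W: "W \<subseteq> nbhd E w"
    have sW: "(\<Sum>a\<in>W. x $ a) = 2/3 * real (card (W \<inter> set cs))"
    proof -
      have "(\<Sum>a\<in>W. x $ a) = (\<Sum>a\<in>W. if a \<in> set cs then 2/3 else 0)" by (simp add: x_def)
      also have "\<dots> = 2/3 * real (card (W \<inter> set cs))" by (simp add: sum.If_cases Int_def)
      finally show ?thesis .
    qed
    have pm: "card (W \<inter> set cs) \<le> card W" by (intro card_mono) auto
    show "(\<Sum>a\<in>W. x $ a) + (real (card W) - 1) * x $ w \<le> real (card W)"
    proof (cases "w \<in> set cs")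
      case True
      then obtain i where i: "i < k" "w = cs ! i" by (auto simp: in_set_conv_nth k_def)
      have "W \<inter> set cs \<subseteq> {cs ! (Suc i mod k), cs ! ((i + k - 1) mod k)}"
      proof
        fix u assume u: "u \<in> W \<inter> set cs"
        then obtain j where j: "j < k" "u = cs ! j" by (auto simp: in_set_conv_nth k_def)
        have "E w u" using u W by (auto simp: nbhd_def)
        then have "j = Suc i mod k \<or> i = Suc j mod k" using adj[OF i(1) j(1)] i j by simp
        then show "u \<in> {cs ! (Suc i mod k), cs ! ((i + k - 1) mod k)}"
        proof
          assume "j = Suc i mod k" then show ?thesis using j by simp
        next
          assume ij: "i = Suc j mod k"
          have "j = (i + k - 1) mod k"
          proof (cases "Suc j < k")
            case True
            then have "i = Suc j" using ij by simp
            then have "(i + k - 1) mod k = (j + k) mod k" by simp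
            also have "\<dots> = j" using j by simp
            finally show ?thesis by simp
          next
            case False
            then have "Suc j = k" using j by simp
            then have "i = 0" using ij by simp
            then show ?thesis using \<open>Suc j = k\<close> by simp
          qed
          then show ?thesis using j by simp
        qed
      qed
      then have "card (W \<inter> set cs) \<le> card {cs ! (Suc i mod k), cs ! ((i + k - 1) mod k)}"
        by (intro card_mono) auto
      also have "\<dots> \<le> 2" by (simp add: card_insert_if)
      finally have "card (W \<inter> set cs) \<le> 2" .
      then have r1: "real (card (W \<inter> set cs)) \<le> 2" by simp
      have r2: "real (card (W \<inter> set cs)) \<le> real (card W)" using pm by simp
      have xw: "x $ w = 2/3" using True by (simp add: x_def)
      show ?thesis unfolding sW xw using ar2[OF r1 r2] by simp
    next
      case False
      then have xw: "x $ w = 0" by (simp add: x_def)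
      have r2: "real (card (W \<inter> set cs)) \<le> real (card W)" using pm by simp
      show ?thesis unfolding sW xw using r2 by simp
    qed
  qed
  then have xP: "x \<in> co2plex_polytope E" using eq by simp
  have "(\<Sum>i<k. x $ (cs ! i)) \<le> (2 * real k - 1) / 3"
    by (rule hull_bound[where E=E and I="{..<k}" and h="\<lambda>i. cs ! i" and y=x, OF gb xP])
  moreover have "(\<Sum>i<k. x $ (cs ! i)) = (\<Sum>i<k. 2/3)" by (rule sum.cong) (auto simp: x_def k_def)
  ultimately show False by simp
qed
theorem mainTheorem13:
  fixes E :: "'a::finite \<Rightarrow> 'a \<Rightarrow> bool"
  assumes "simple_connected_graph E"
    and "co2plex_polytope E = T_polytope E"
  shows "(\<nexists>K. card K = 4 \<and> two_plex E K) \<and>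
         (\<nexists>cs. is_hole E cs \<and> \<not> (3 dvd length cs))"
proof -
  have sym: "\<forall>u v. E u v \<longrightarrow> E v u" and irr: "\<forall>v. \<not> E v v"
    using assms(1) unfolding simple_connected_graph_def by auto
  show ?thesis
    using part1[OF sym irr assms(2)] part2[OF sym irr assms(2)] by blast
qed

end
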